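(* Let $G$ be a simple undirected connected Laplacian integral graph with Laplacian $L$, and let $u,v$ be distinct vertices with $N(u)\setminus\{v\}=N(v)\setminus\{u\}$. Let $M=(\mathbf e_u-\mathbf e_v)(\mathbf e_u-\mathbf e_v)^T$ and set $\alpha=-\tfrac34$ if $u$ and $v$ are adjacent in $G$ and $\alpha=\tfrac14$ otherwise (so that the edge between $u$ and $v$ gets weight $\tfrac14$). Then $L^\alpha=L+\alpha M$ exhibits perfect state transfer between $u$ and $v$ at time $2\pi$, and $L^\alpha$ is periodic at every other vertex at time $2\pi$.
   Context: A graph is Laplacian integral if all eigenvalues of its Laplacian $L=D-A$ are integers. $N(u)$ is the neighbourhood of $u$; $\mathbf e_u$ is the standard basis vector of $u$. For a real symmetric $H$, $U_H(t)=\exp(-itH)$; $H$ exhibits perfect state transfer between distinct $u,v$ at time $\tau$ if $U_H(\tau)\mathbf e_u=\gamma\mathbf e_v$ for some $\gamma\in\mathbb C$; $H$ is periodic at $w$ at time $\tau\ne0$ if $U_H(\tau)\mathbf e_w=\gamma\mathbf e_w$ for some $\gamma\in\mathbb C$. *)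

theory Defs
  imports "HOL-Analysis.Analysis"
begin

definition simple_graph :: "('n::finite \<Rightarrow> 'n \<Rightarrow> bool) \<Rightarrow> bool" where
  "simple_graph E \<longleftrightarrow> (\<forall>x y. E x y \<longrightarrow> E y x) \<and> (\<forall>x. \<not> E x x)"

definition connected_graph :: "('n::finite \<Rightarrow> 'n \<Rightarrow> bool) \<Rightarrow> bool" where
  "connected_graph E \<longleftrightarrow> (\<forall>x y. E\<^sup>*\<^sup>* x y)"

definition nbhd :: "('n \<Rightarrow> 'n \<Rightarrow> bool) \<Rightarrow> 'n \<Rightarrow> 'n set" where
  "nbhd E x = {y. E x y}"

definition laplacian :: "('n::finite \<Rightarrow> 'n \<Rightarrow> bool) \<Rightarrow> real^'n^'n" where
  "laplacian E = (\<chi> i j. (if i = j then real (card (nbhd E i)) else 0) - (if E i j then 1 else 0))"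

definition is_eigenvalue :: "real^'n^'n \<Rightarrow> real \<Rightarrow> bool" where
  "is_eigenvalue A lam \<longleftrightarrow> (\<exists>x. x \<noteq> 0 \<and> A *v x = lam *\<^sub>R x)"

definition laplacian_integral :: "('n::finite \<Rightarrow> 'n \<Rightarrow> bool) \<Rightarrow> bool" where
  "laplacian_integral E \<longleftrightarrow> (\<forall>lam. is_eigenvalue (laplacian E) lam \<longrightarrow> lam \<in> \<int>)"

definition matpow :: "'a::semiring_1^'n::finite^'n \<Rightarrow> nat \<Rightarrow> 'a^'n^'n" where
  "matpow A k = ((\<lambda>B. A ** B) ^^ k) (mat 1)"

definition mexp :: "complex^'n::finite^'n \<Rightarrow> complex^'n^'n" where
  "mexp A = (\<Sum>k. (1 / fact k :: real) *\<^sub>R matpow A k)"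

definition transition :: "real^'n::finite^'n \<Rightarrow> real \<Rightarrow> complex^'n^'n" where
  "transition H t = mexp (\<chi> i j. - \<i> * complex_of_real t * complex_of_real (H $ i $ j))"

definition std_basis :: "'n::finite \<Rightarrow> complex^'n" where
  "std_basis u = axis u 1"

definition perfect_state_transfer :: "real^'n::finite^'n \<Rightarrow> 'n \<Rightarrow> 'n \<Rightarrow> real \<Rightarrow> bool" where
  "perfect_state_transfer H u v \<tau> \<longleftrightarrow> u \<noteq> v \<and>
     (\<exists>\<gamma>::complex. transition H \<tau> *v std_basis u = \<gamma> *s std_basis v)"

definition periodic_at :: "real^'n::finite^'n \<Rightarrow> 'n \<Rightarrow> real \<Rightarrow> bool" where
  "periodic_at H w \<tau> \<longleftrightarrow> \<tau> \<noteq> 0 \<and>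
     (\<exists>\<gamma>::complex. transition H \<tau> *v std_basis w = \<gamma> *s std_basis w)"

end

theory Submission
  imports Defs
begin



lemma matpow_Suc: "matpow A (Suc k) = A ** matpow A k"
  by (simp add: matpow_def)

lemma matpow_0: "matpow A 0 = mat 1"
  by (simp add: matpow_def)

lemma norm_vec_le_sum: "norm (x :: 'a::real_normed_vector^'n::finite) \<le> (\<Sum>i\<in>UNIV. norm (x $ i))"
  by (simp add: norm_vec_def L2_set_le_sum)

lemma matpow_entry_bound:
  fixes C :: "complex^'n::finite^'n"
  defines "B \<equiv> (\<Sum>i\<in>UNIV. \<Sum>j\<in>UNIV. norm (C $ i $ j)) + 1"
  shows "norm (matpow C k $ i $ j) \<le> B ^ k"
proof (induction k arbitrary: i j)
  case 0
  then show ?case by (simp add: matpow_0 mat_def)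
next
  case (Suc k)
  have B0: "0 \<le> B" unfolding B_def by (intro add_nonneg_nonneg sum_nonneg) auto
  have "norm (matpow C (Suc k) $ i $ j) = norm (\<Sum>l\<in>UNIV. C $ i $ l * matpow C k $ l $ j)"
    by (simp add: matpow_Suc matrix_matrix_mult_def)
  also have "\<dots> \<le> (\<Sum>l\<in>UNIV. norm (C $ i $ l) * B ^ k)"
    by (rule order_trans[OF norm_sum sum_mono]) (simp add: norm_mult mult_left_mono Suc.IH)
  also have "\<dots> = (\<Sum>l\<in>UNIV. norm (C $ i $ l)) * B ^ k" by (simp add: sum_distrib_right)
  also have "\<dots> \<le> B * B ^ k"
  proof (rule mult_right_mono)
    have "(\<Sum>l\<in>UNIV. norm (C $ i $ l)) \<le> (\<Sum>i\<in>UNIV. \<Sum>j\<in>UNIV. norm (C $ i $ j))"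
      by (rule member_le_sum[where f = "\<lambda>i. \<Sum>j\<in>UNIV. norm (C $ i $ j)"]) (auto intro: sum_nonneg)
    then show "(\<Sum>l\<in>UNIV. norm (C $ i $ l)) \<le> B" unfolding B_def by simp
  qed (use B0 in simp)
  finally show ?case by simp
qed

lemma mexp_summable:
  fixes C :: "complex^'n::finite^'n"
  shows "summable (\<lambda>k. (1 / fact k :: real) *\<^sub>R matpow C k)"
proof -
  define B where "B = (\<Sum>i\<in>UNIV. \<Sum>j\<in>UNIV. norm (C $ i $ j)) + 1"
  define N where "N = real (CARD('n)) * real (CARD('n))"
  have nb: "norm (matpow C k) \<le> N * B ^ k" for k
  proof -
    have "norm (matpow C k) \<le> (\<Sum>i\<in>UNIV. norm (matpow C k $ i))" by (rule norm_vec_le_sum)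
    also have "\<dots> \<le> (\<Sum>i\<in>(UNIV::'n set). \<Sum>j\<in>(UNIV::'n set). norm (matpow C k $ i $ j))"
      by (intro sum_mono norm_vec_le_sum)
    also have "\<dots> \<le> (\<Sum>i\<in>(UNIV::'n set). \<Sum>j\<in>(UNIV::'n set). B ^ k)"
      by (intro sum_mono) (use matpow_entry_bound[of C] B_def in simp)
    also have "\<dots> = N * B ^ k" by (simp add: N_def)
    finally show ?thesis .
  qed
  have "summable (\<lambda>k. N * (inverse (fact k) * B ^ k))"
    by (intro summable_mult summable_exp)
  then show ?thesis
  proof (rule summable_comparison_test'[where N=0])
    fix k :: nat
    have "norm ((1 / fact k :: real) *\<^sub>R matpow C k) = (1 / fact k) * norm (matpow C k)"
      by simp
    also have "\<dots> \<le> (1 / fact k) * (N * B ^ k)"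
      by (intro mult_left_mono nb) auto
    finally show "norm ((1 / fact k :: real) *\<^sub>R matpow C k) \<le> N * (inverse (fact k) * B ^ k)"
      by (simp add: field_simps)
  qed
qed

lemma bl_mv: "bounded_linear (\<lambda>A :: complex^'n::finite^'m::finite. A *v y)"
  apply (rule linear_conv_bounded_linear[THEN iffD1])
  apply (rule linearI)
   apply (simp add: matrix_vector_mult_add_rdistrib)
  apply (simp add: matrix_vector_mult_def vec_eq_iff scaleR_sum_right)
  done

lemma bl_sv: "bounded_linear (\<lambda>c :: complex. c *s (y :: complex^'n::finite))"
  apply (rule linear_conv_bounded_linear[THEN iffD1])
  apply (rule linearI)
   apply (simp add: vec_eq_iff algebra_simps)
  apply (simp add: vec_eq_iff)
  done

lemma mexp_eigen:
  fixes C :: "complex^'n::finite^'n"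
  assumes "C *v y = c *s y"
  shows "mexp C *v y = exp c *s y"
proof -
  have pw: "matpow C k *v y = (c ^ k) *s y" for k
  proof (induction k)
    case 0 then show ?case by (simp add: matpow_0)
  next
    case (Suc k)
    have "matpow C (Suc k) *v y = C *v (matpow C k *v y)"
      by (simp add: matpow_Suc matrix_vector_mul_assoc)
    also have "\<dots> = C *v ((c ^ k) *s y)" by (simp add: Suc.IH)
    also have "\<dots> = (c ^ k) *s (C *v y)" by (simp add: matrix_vector_mult_def vec_eq_iff sum_distrib_left algebra_simps)
    also have "\<dots> = (c ^ Suc k) *s y" by (simp add: assms)
    finally show ?case .
  qed
  have "mexp C *v y = (\<Sum>k. ((1 / fact k :: real) *\<^sub>R matpow C k) *v y)"
    unfolding mexp_def by (rule bounded_linear.suminf[OF bl_mv mexp_summable])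
  also have "\<dots> = (\<Sum>k. (c ^ k /\<^sub>R fact k) *s y)"
  proof (rule suminf_cong)
    fix k
    show "((1 / fact k :: real) *\<^sub>R matpow C k) *v y = (c ^ k /\<^sub>R fact k) *s y"
      using pw[of k] by (simp add: vec_eq_iff matrix_vector_mult_def inverse_eq_divide flip: scaleR_sum_right)
  qed
  also have "\<dots> = (\<Sum>k. c ^ k /\<^sub>R fact k) *s y"
    by (rule bounded_linear.suminf[OF bl_sv summable_exp_generic, symmetric])
  also have "\<dots> = exp c *s y" by (simp add: exp_def)
  finally show ?thesis .
qed



lemma sym_inner:
  fixes A :: "real^'n::finite^'n"
  assumes "transpose A = A"
  shows "(A *v x) \<bullet> y = x \<bullet> (A *v y)"
proof -
  have "A *v x = x v* A" using vector_transpose_matrix[of x A] assms by simp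
  then show ?thesis by (simp add: dot_lmul_matrix)
qed

lemma sym_eigvec:
  fixes A :: "real^'n::finite^'n"
  assumes sym: "transpose A = A" and S: "subspace S" "S \<noteq> {0}" "\<forall>x\<in>S. A *v x \<in> S"
  shows "\<exists>x\<in>S. x \<noteq> 0 \<and> (\<exists>\<mu>. A *v x = \<mu> *\<^sub>R x)"
proof -
  define K where "K = sphere 0 1 \<inter> S"
  have cK: "compact K" unfolding K_def
    by (intro compact_Int_closed compact_sphere closed_subspace S(1))
  obtain y where y: "y \<in> S" "y \<noteq> 0" using S(2) subspace_0[OF S(1)] by blast
  have "(1 / norm y) *\<^sub>R y \<in> K" unfolding K_def using y subspace_scale[OF S(1)] by auto
  then have neK: "K \<noteq> {}" by blast
  have cont: "continuous_on K (\<lambda>x. x \<bullet> (A *v x))"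
    by (intro continuous_intros)
  obtain x0 where x0: "x0 \<in> K" and mx: "\<And>z. z \<in> K \<Longrightarrow> z \<bullet> (A *v z) \<le> x0 \<bullet> (A *v x0)"
    using continuous_attains_sup[OF cK neK cont] by blast
  define lam where "lam = x0 \<bullet> (A *v x0)"
  have x0S: "x0 \<in> S" and nx0: "norm x0 = 1" using x0 unfolding K_def by auto
  have x0x0: "x0 \<bullet> x0 = 1" using nx0 by (simp add: norm_eq_sqrt_inner)
  have orth: "y \<bullet> (A *v x0) = 0" if yS: "y \<in> S" and yo: "y \<bullet> x0 = 0" for y
  proof -
    define b where "b = y \<bullet> (A *v x0)"
    define c where "c = y \<bullet> (A *v y) - lam * (y \<bullet> y)"
    have ineq: "2 * t * b + t\<^sup>2 * c \<le> 0" for t :: real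
    proof -
      define z where "z = x0 + t *\<^sub>R y"
      have zS: "z \<in> S" unfolding z_def using x0S yS S(1) by (simp add: subspace_add subspace_scale)
      have zz: "z \<bullet> z = 1 + t\<^sup>2 * (y \<bullet> y)"
        unfolding z_def using x0x0 yo by (simp add: inner_add_left inner_add_right inner_commute power2_eq_square)
      have ypos: "0 \<le> y \<bullet> y" by simp
      have zpos: "0 < z \<bullet> z" using zz ypos by (simp add: add_pos_nonneg)
      have nz: "norm z = sqrt (z \<bullet> z)" by (simp add: norm_eq_sqrt_inner)
      have "(1 / norm z) *\<^sub>R z \<in> K" unfolding K_def using zS zpos subspace_scale[OF S(1)]
        by (auto simp: nz)
      from mx[OF this] have "(1 / norm z)^2 * (z \<bullet> (A *v z)) \<le> lam"
        by (simp add: lam_def matrix_vector_mult_scaleR power2_eq_square algebra_simps)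
      moreover have "(1 / norm z)^2 = 1 / (z \<bullet> z)" using zpos by (simp add: nz power_divide)
      ultimately have "z \<bullet> (A *v z) \<le> lam * (z \<bullet> z)" using zpos by (simp add: field_simps)
      moreover have "z \<bullet> (A *v z) = lam + 2 * t * b + t\<^sup>2 * (y \<bullet> (A *v y))"
      proof -
        have "z \<bullet> (A *v z) = x0 \<bullet> (A *v x0) + t * (x0 \<bullet> (A *v y)) + t * (y \<bullet> (A *v x0)) + t * t * (y \<bullet> (A *v y))"
          unfolding z_def by (simp add: matrix_vector_right_distrib matrix_vector_mult_scaleR inner_add_left inner_add_right algebra_simps)
        moreover have "x0 \<bullet> (A *v y) = y \<bullet> (A *v x0)" using sym_inner[OF sym, of y x0] by (simp add: inner_commute)
        ultimately show ?thesis by (simp add: lam_def b_def power2_eq_square)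
      qed
      ultimately show ?thesis using zz by (simp add: c_def algebra_simps)
    qed
    have "b = 0"
    proof (rule ccontr)
      assume "b \<noteq> 0"
      define a where "a = \<bar>c\<bar> + 1"
      define t where "t = b / a"
      have pos: "0 < a" by (simp add: a_def)
      have pos2: "0 < 2 * a + c" by (simp add: a_def abs_if)
      have "2 * t * b + t\<^sup>2 * c = b\<^sup>2 * (2 * a + c) / a^2"
        unfolding t_def using pos by (simp add: field_simps power2_eq_square)
      moreover have "0 < b\<^sup>2 * (2 * a + c) / a^2"
        using \<open>b \<noteq> 0\<close> pos pos2 by (intro divide_pos_pos mult_pos_pos) auto
      ultimately show False using ineq[of t] by simp
    qed
    then show ?thesis by (simp add: b_def)
  qed
  define w where "w = A *v x0 - lam *\<^sub>R x0"
  have wS: "w \<in> S" unfolding w_def using S x0S by (simp add: subspace_diff subspace_scale)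
  have wo: "w \<bullet> x0 = 0" unfolding w_def using x0x0
    by (simp add: lam_def inner_diff_left inner_diff_right inner_commute)
  have "w \<bullet> (A *v x0) = 0" using orth[OF wS wo] .
  then have "w \<bullet> w = 0" using wo unfolding w_def
    by (simp add: inner_diff_left inner_diff_right inner_commute)
  then have "A *v x0 = lam *\<^sub>R x0" unfolding w_def by simp
  moreover have "x0 \<noteq> 0" using nx0 by auto
  ultimately show ?thesis using x0S by blast
qed

lemma sym_span_eig:
  fixes A :: "real^'n::finite^'n"
  assumes sym: "transpose A = A"
  shows "span {x. \<exists>\<mu>. A *v x = \<mu> *\<^sub>R x} = UNIV"
proof (rule ccontr)
  define Eg where "Eg = {x. \<exists>\<mu>. A *v x = \<mu> *\<^sub>R x}"
  define W where "W = span Eg"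
  assume "span {x. \<exists>\<mu>. A *v x = \<mu> *\<^sub>R x} \<noteq> UNIV"
  then have "W \<noteq> UNIV" by (simp add: W_def Eg_def)
  then have "dim Eg < DIM(real^'n)"
    using dim_eq_full[of Eg] dim_subset_UNIV[of Eg] unfolding W_def by linarith
  then obtain x where x: "x \<noteq> 0" "\<And>y. y \<in> W \<Longrightarrow> orthogonal x y"
    using orthogonal_to_subspace_exists unfolding W_def by blast
  define S where "S = {y. \<forall>w\<in>W. orthogonal w y}"
  have sS: "subspace S" unfolding S_def by (rule subspace_orthogonal_to_vectors)
  have xS: "x \<in> S" using x(2) unfolding S_def by (simp add: orthogonal_commute)
  have AW: "A *v w \<in> W" if "w \<in> W" for w
  proof -
    have "A *v w \<in> (*v) A ` W" using that by blast
    also have "(*v) A ` W = span ((*v) A ` Eg)" unfolding W_def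
      by (rule span_linear_image[symmetric]) (simp add: matrix_vector_mul_linear)
    also have "\<dots> \<subseteq> W" unfolding W_def
    proof (rule span_mono, clarify)
      fix z assume "z \<in> Eg"
      then obtain mu where "A *v z = mu *\<^sub>R z" by (auto simp: Eg_def)
      then show "A *v z \<in> Eg" unfolding Eg_def
        by (auto intro!: exI[of _ mu] simp: matrix_vector_mult_scaleR)
    qed
    finally show ?thesis .
  qed
  have inv: "\<forall>y\<in>S. A *v y \<in> S"
  proof
    fix y assume "y \<in> S"
    show "A *v y \<in> S" unfolding S_def
    proof (intro CollectI ballI)
      fix w assume "w \<in> W"
      have "w \<bullet> (A *v y) = (A *v w) \<bullet> y" using sym_inner[OF sym] by simp
      also have "\<dots> = 0" using \<open>y \<in> S\<close> AW[OF \<open>w \<in> W\<close>] by (auto simp: S_def orthogonal_def)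
      finally show "orthogonal w (A *v y)" by (simp add: orthogonal_def)
    qed
  qed
  have "S \<noteq> {0}" using xS x(1) by blast
  from sym_eigvec[OF sym sS this inv] obtain z where z: "z \<in> S" "z \<noteq> 0" "\<exists>\<mu>. A *v z = \<mu> *\<^sub>R z"
    by blast
  have "z \<in> W" using z(3) unfolding W_def Eg_def by (intro span_base) simp
  then have "orthogonal z z" using z(1) unfolding S_def by blast
  then show False using z(2) by (simp add: orthogonal_def)
qed



definition cv :: "real^'n::finite \<Rightarrow> complex^'n" where
  "cv x = (\<chi> i. complex_of_real (x $ i))"

lemma cv_add: "cv (x + y) = cv x + cv y" by (simp add: cv_def vec_eq_iff)
lemma cv_scale: "cv (c *\<^sub>R x) = c *\<^sub>R cv x"
  by (simp add: cv_def vec_eq_iff) (simp add: scaleR_conv_of_real)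
lemma cv_0: "cv 0 = 0" by (simp add: cv_def vec_eq_iff)
lemma cv_axis: "cv (axis w 1) = std_basis w" by (simp add: cv_def std_basis_def vec_eq_iff axis_def)

lemma Q_eig:
  fixes H :: "real^'n::finite^'n"
  assumes "H *v x = \<mu> *\<^sub>R x"
  shows "transition H t *v cv x = exp (-\<i> * of_real t * of_real \<mu>) *s cv x"
  unfolding transition_def
proof (rule mexp_eigen)
  have "(\<Sum>j\<in>UNIV. H $ i $ j * x $ j) = \<mu> * x $ i" for i
    using assms by (simp add: vec_eq_iff matrix_vector_mult_def)
  then have "(\<Sum>j\<in>UNIV. complex_of_real (H $ i $ j) * complex_of_real (x $ j)) = of_real \<mu> * of_real (x $ i)" for i
    by (metis (no_types, lifting) of_real_mult of_real_sum sum.cong)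
  then show "(\<chi> i j. - \<i> * complex_of_real t * complex_of_real (H $ i $ j)) *v cv x =
    (- \<i> * complex_of_real t * complex_of_real \<mu>) *s cv x"
    unfolding cv_def vec_eq_iff matrix_vector_mult_def
    by (simp add: sum_negf mult.assoc flip: sum_distrib_left)
qed

lemma exp_int: assumes "\<mu> \<in> \<int>"
  shows "exp (-\<i> * complex_of_real (2*pi) * complex_of_real \<mu>) = 1"
proof -
  obtain m where m: "\<mu> = of_int m" using assms Ints_cases by blast
  have "-\<i> * complex_of_real (2*pi) * complex_of_real \<mu> = (2 * of_int (-m) * pi) * \<i>"
    by (simp add: m)
  then show ?thesis by (simp only:) (rule exp_integer_2pi, simp)
qed

lemma exp_half: assumes "m \<in> \<int>"
  shows "exp (-\<i> * complex_of_real (2*pi) * complex_of_real (m + 1/2)) = -1"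
proof -
  obtain n where n: "m = of_int n" using assms Ints_cases by blast
  have "-\<i> * complex_of_real (2*pi) * complex_of_real (m + 1/2) = (2 * of_int (-n-1) * pi) * \<i> + \<i> * pi"
    by (simp add: n algebra_simps)
  moreover have "exp ((2 * of_int (-n-1) * pi) * \<i>) = 1" by (rule exp_integer_2pi) simp
  ultimately show ?thesis by (simp add: exp_add)
qed

lemma card_split: "finite A \<Longrightarrow> card A = card (A - {v}) + (if v \<in> A then 1 else 0)"
  using card.remove[of A v] by (cases "v \<in> A") auto

lemma nb_sym: "simple_graph E \<Longrightarrow> E x y \<longleftrightarrow> E y x"
  by (auto simp: simple_graph_def)

lemma deg_eq:
  fixes E :: "'n::finite \<Rightarrow> 'n \<Rightarrow> bool"
  assumes "simple_graph E" "nbhd E u - {v} = nbhd E v - {u}"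
  shows "card (nbhd E u) = card (nbhd E v)"
proof -
  have "card (nbhd E u) = card (nbhd E u - {v}) + (if v \<in> nbhd E u then 1 else 0)"
    by (rule card_split) simp
  moreover have "card (nbhd E v) = card (nbhd E v - {u}) + (if u \<in> nbhd E v then 1 else 0)"
    by (rule card_split) simp
  moreover have "v \<in> nbhd E u \<longleftrightarrow> u \<in> nbhd E v" using nb_sym[OF assms(1)] by (simp add: nbhd_def)
  ultimately show ?thesis using assms(2) by simp
qed

lemma L_sym: "simple_graph E \<Longrightarrow> transpose (laplacian E) = laplacian E"
  unfolding transpose_def laplacian_def vec_eq_iff simple_graph_def by auto

lemma L_d:
  fixes E :: "'n::finite \<Rightarrow> 'n \<Rightarrow> bool"
  assumes sg: "simple_graph E" and nb: "nbhd E u - {v} = nbhd E v - {u}" and uv: "u \<noteq> v"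
  shows "laplacian E *v (axis u 1 - axis v 1) =
     (real (card (nbhd E u)) + (if E u v then 1 else 0)) *\<^sub>R (axis u 1 - axis v 1)"
proof -
  have deq: "card (nbhd E u) = card (nbhd E v)" by (rule deg_eq[OF sg nb])
  have irr: "\<not> E x x" for x using sg by (simp add: simple_graph_def)
  have com: "E i u \<longleftrightarrow> E i v" if "i \<noteq> u" "i \<noteq> v" for i
  proof -
    have "i \<in> nbhd E u - {v} \<longleftrightarrow> i \<in> nbhd E v - {u}" using nb by simp
    then show ?thesis using that nb_sym[OF sg] by (simp add: nbhd_def)
  qed
  show ?thesis
    unfolding matrix_vector_mult_diff_distrib matrix_vector_mult_basis
  proof (rule vec_eq_iff[THEN iffD2, rule_format])
    fix i
    have evu: "E v u = E u v" using nb_sym[OF sg, of u v] by simp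
    consider "i = u" | "i = v" | "i \<noteq> u" "i \<noteq> v" by blast
    then show "(column u (laplacian E) - column v (laplacian E)) $ i =
      ((real (card (nbhd E u)) + (if E u v then 1 else 0)) *\<^sub>R (axis u 1 - axis v 1)) $ i"
    proof cases
      case 1 then show ?thesis using uv irr by (simp add: column_def laplacian_def axis_def)
    next
      case 2 then show ?thesis using uv irr deq evu by (simp add: column_def laplacian_def axis_def)
    next
      case 3 then show ?thesis using com[OF 3] by (simp add: column_def laplacian_def axis_def)
    qed
  qed
qed



lemma cmv_scaleR: "(A :: complex^'n::finite^'m::finite) *v (c *\<^sub>R y) = c *\<^sub>R (A *v y)"
  by (simp add: matrix_vector_mult_def vec_eq_iff scaleR_sum_right)

lemma cv_diff: "cv (x - y) = cv x - cv y" by (simp add: cv_def vec_eq_iff)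

lemma not_int_half: "(-3/2 :: real) \<notin> \<int>" "(1/2 :: real) \<notin> \<int>"
proof -
  show "(-3/2 :: real) \<notin> \<int>"
  proof
    assume "(-3/2 :: real) \<in> \<int>"
    then obtain n where "(-3/2::real) = of_int n" by (auto elim: Ints_cases)
    then have "real_of_int (2*n) = real_of_int (-3)" by simp
    then have "2*n = -3" by (simp only: of_int_eq_iff)
    then show False by presburger
  qed
  show "(1/2 :: real) \<notin> \<int>"
  proof
    assume "(1/2 :: real) \<in> \<int>"
    then obtain n where "(1/2::real) = of_int n" by (auto elim: Ints_cases)
    then have "real_of_int (2*n) = real_of_int 1" by simp
    then have "2*n = 1" by (simp only: of_int_eq_iff)
    then show False by presburger
  qed
qed

theorem corollary2p6:
  fixes E :: "'n::finite \<Rightarrow> 'n \<Rightarrow> bool" and u v :: 'n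
  assumes "simple_graph E" and "connected_graph E" and "laplacian_integral E"
    and "u \<noteq> v"
    and "nbhd E u - {v} = nbhd E v - {u}"
  defines "M \<equiv> (\<chi> i j. ((if i = u then 1 else 0) - (if i = v then 1 else 0)) *
                          ((if j = u then 1 else 0) - (if j = v then 1 else 0)) :: real^'n^'n)"
    and "\<alpha> \<equiv> (if E u v then - 3 / 4 else 1 / 4 :: real)"
  shows "perfect_state_transfer (laplacian E + \<alpha> *\<^sub>R M) u v (2 * pi)
     \<and> (\<forall>w. w \<noteq> u \<and> w \<noteq> v \<longrightarrow> periodic_at (laplacian E + \<alpha> *\<^sub>R M) w (2 * pi))"
proof -
  note sg = assms(1) and uv = assms(4) and nb = assms(5)
  define L where "L = laplacian E"
  define d :: "real^'n" where "d = axis u 1 - axis v 1"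
  define kk where "kk = real (card (nbhd E u)) + (if E u v then 1 else 0)"
  define H where "H = L + \<alpha> *\<^sub>R M"
  have Mdef: "M = (\<chi> i j. d $ i * d $ j)" by (simp add: M_def d_def axis_def)
  have Md: "M *v x = (d \<bullet> x) *\<^sub>R d" for x
    unfolding Mdef by (simp add: vec_eq_iff matrix_vector_mult_def inner_vec_def sum_distrib_left sum_distrib_right mult_ac)
  have Ld: "L *v d = kk *\<^sub>R d" unfolding L_def d_def kk_def by (rule L_d[OF sg nb uv])
  have dd: "d \<bullet> d = 2" by (simp add: d_def inner_diff_left inner_diff_right inner_axis_axis uv not_sym[OF uv])
  have symL: "transpose L = L" unfolding L_def by (rule L_sym[OF sg])
  have symH: "transpose H = H"
  proof -
    have "L $ i $ j = L $ j $ i" for i j using symL by (simp add: transpose_def vec_eq_iff)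
    then show ?thesis by (simp add: H_def Mdef transpose_def vec_eq_iff mult.commute)
  qed
  have Hx: "H *v x = L *v x + (\<alpha> * (d \<bullet> x)) *\<^sub>R d" for x
    by (simp add: H_def matrix_vector_mult_add_rdistrib scaleR_matrix_vector_assoc[symmetric] Md)
  have Hd: "H *v d = (kk + 2 * \<alpha>) *\<^sub>R d" by (simp add: Hx Ld dd algebra_simps)
  have kkI: "kk \<in> \<int>" by (simp add: kk_def)
  have Lint: "\<mu> \<in> \<int>" if "x \<noteq> 0" "L *v x = \<mu> *\<^sub>R x" for x \<mu>
    using assms(3) that unfolding laplacian_integral_def is_eigenvalue_def L_def by blast
  define T where "T = transition H (2 * pi)"
  define Q where "Q x \<longleftrightarrow> T *v cv x = cv (x - (d \<bullet> x) *\<^sub>R d)" for x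
  have Qeig: "Q x" if eig: "H *v x = \<mu> *\<^sub>R x" for x \<mu>
  proof -
    have TE: "T *v cv x = exp (-\<i> * of_real (2 * pi) * of_real \<mu>) *s cv x"
      unfolding T_def by (rule Q_eig[OF eig])
    define s where "s = d \<bullet> x"
    show ?thesis
    proof (cases "s = 0")
      case True
      show ?thesis
      proof (cases "x = 0")
        case True then show ?thesis by (simp add: Q_def cv_0)
      next
        case False
        have "L *v x = \<mu> *\<^sub>R x" using eig Hx[of x] True by (simp add: s_def)
        then have "\<mu> \<in> \<int>" using Lint False by blast
        then have "exp (-\<i> * of_real (2 * pi) * of_real \<mu>) = 1" by (rule exp_int)
        then show ?thesis using TE True by (simp add: Q_def s_def)
      qed
    next
      case False
      have "\<mu> * s = d \<bullet> (H *v x)" using eig by (simp add: s_def)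
      also have "\<dots> = (H *v d) \<bullet> x" using sym_inner[OF symH, of d x] by simp
      also have "\<dots> = (kk + 2 * \<alpha>) * s" by (simp add: Hd s_def)
      finally have mu: "\<mu> = kk + 2 * \<alpha>" using False by simp
      define x' where "x' = x - (s / 2) *\<^sub>R d"
      have dx': "d \<bullet> x' = 0" using dd by (simp add: x'_def s_def inner_diff_right)
      have Hx': "H *v x' = \<mu> *\<^sub>R x'"
        by (simp add: x'_def matrix_vector_mult_diff_distrib matrix_vector_mult_scaleR eig Hd mu algebra_simps)
      have Lx': "L *v x' = \<mu> *\<^sub>R x'" using Hx' Hx[of x'] dx' by simp
      have "x' = 0"
      proof (rule ccontr)
        assume "x' \<noteq> 0"
        then have "\<mu> \<in> \<int>" using Lint Lx' by blast
        then have "\<mu> - kk \<in> \<int>" using kkI by (simp add: Ints_diff)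
        then have "2 * \<alpha> \<in> \<int>" using mu by simp
        then show False using not_int_half by (simp add: \<alpha>_def split: if_splits)
      qed
      then have xd: "x = (s / 2) *\<^sub>R d" by (simp add: x'_def)
      have "kk + 2 * \<alpha> - 1/2 \<in> \<int>" using kkI
        by (simp add: \<alpha>_def Ints_diff Ints_add)
      then have "exp (-\<i> * of_real (2 * pi) * of_real ((kk + 2 * \<alpha> - 1/2) + 1/2)) = -1"
        by (rule exp_half)
      then have ex: "exp (-\<i> * of_real (2 * pi) * of_real \<mu>) = -1" by (simp add: mu)
      have "2 *\<^sub>R x = s *\<^sub>R d" by (subst xd) simp
      then have "x - (d \<bullet> x) *\<^sub>R d = x - 2 *\<^sub>R x" by (simp add: s_def)
      also have "\<dots> = (-1) *\<^sub>R x" by (simp add: scaleR_2)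
      finally have xm: "x - (d \<bullet> x) *\<^sub>R d = (-1) *\<^sub>R x" .
      have "cv ((-1) *\<^sub>R x) = - cv x" by (simp only: cv_scale) simp
      then show ?thesis unfolding Q_def xm using TE ex by simp
    qed
  qed
  have Qall: "Q x" for x
  proof -
    have "x \<in> span {x. \<exists>\<mu>. H *v x = \<mu> *\<^sub>R x}" using sym_span_eig[OF symH] by simp
    then show ?thesis
    proof (induction rule: span_induct_alt)
      case base then show ?case by (simp add: Q_def cv_0)
    next
      case (step c x y)
      from step(1) obtain mu where "H *v x = mu *\<^sub>R x" by blast
      then have "Q x" by (rule Qeig)
      have "T *v cv (c *\<^sub>R x + y) = c *\<^sub>R (T *v cv x) + T *v cv y"
        by (simp add: cv_add cv_scale cmv_scaleR matrix_vector_right_distrib)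
      also have "\<dots> = c *\<^sub>R cv (x - (d \<bullet> x) *\<^sub>R d) + cv (y - (d \<bullet> y) *\<^sub>R d)"
        using \<open>Q x\<close> step(2) by (simp add: Q_def)
      also have "\<dots> = cv (c *\<^sub>R (x - (d \<bullet> x) *\<^sub>R d) + (y - (d \<bullet> y) *\<^sub>R d))"
        by (simp add: cv_add cv_scale)
      also have "c *\<^sub>R (x - (d \<bullet> x) *\<^sub>R d) + (y - (d \<bullet> y) *\<^sub>R d)
          = (c *\<^sub>R x + y) - (d \<bullet> (c *\<^sub>R x + y)) *\<^sub>R d"
        by (simp add: inner_add_right scaleR_add_left scaleR_diff_right)
      finally show ?case by (simp add: Q_def)
    qed
  qed
  have Tw: "T *v std_basis w = std_basis w" if "w \<noteq> u" "w \<noteq> v" for w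
    using Qall[of "axis w 1"] that by (simp add: Q_def d_def inner_diff_left inner_axis_axis cv_axis)
  have Tu: "T *v std_basis u = std_basis v"
  proof -
    have "axis u 1 - (d \<bullet> axis u 1) *\<^sub>R d = axis v 1"
      using uv by (simp add: d_def inner_diff_left inner_axis_axis)
    then show ?thesis using Qall[of "axis u 1"] by (simp add: Q_def cv_axis)
  qed
  have "perfect_state_transfer H u v (2 * pi)"
    unfolding perfect_state_transfer_def using uv Tu
    by (auto simp: T_def intro!: exI[of _ 1])
  moreover have "periodic_at H w (2 * pi)" if "w \<noteq> u \<and> w \<noteq> v" for w
    unfolding periodic_at_def using Tw that
    by (auto simp: T_def intro!: exI[of _ 1])
  ultimately show ?thesis by (simp add: H_def L_def)
qed

end
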